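(* Let $\mu$ be a centered log-concave probability measure on $\mathbb{R}^n$, and let $A\subset\mathbb{R}^n$ be a convex body with $rB_2^n\subseteq A$ for some $r>0$. Then $$\mu^+(\partial A)\leq \frac{2n\,\mu(A)}{r}.$$
   Context: A probability measure on $\mathbb{R}^n$ is log-concave (full-dimensional) if it has a density $f$ with $\ln f$ concave; centered means its barycenter is $0$. A convex body is a compact convex set with nonempty interior; $B_2^n$ is the Euclidean unit ball. $\mu^+(\partial A)=\liminf_{\epsilon\to0^+}\frac{\mu((A+\epsilon B_2^n)\setminus A)}{\epsilon}$. *)

theory Defs
  imports "HOL-Analysis.Analysis"
begin

text \<open>Log-concave density: f \<ge> 0 and ln f concave (with ln 0 = -\<infinity>), i.e.
  f((1-t)x + t y) \<ge> f(x)^(1-t) f(y)^t for 0 < t < 1.\<close>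
definition log_concave_fun :: "('a::real_vector \<Rightarrow> real) \<Rightarrow> bool" where
  "log_concave_fun f \<longleftrightarrow> (\<forall>x. 0 \<le> f x) \<and>
     (\<forall>x y. \<forall>t\<in>{0<..<1}. f x powr (1 - t) * f y powr t \<le> f ((1 - t) *\<^sub>R x + t *\<^sub>R y))"

definition centered_log_concave_density :: "('a::euclidean_space \<Rightarrow> real) \<Rightarrow> bool" where
  "centered_log_concave_density f \<longleftrightarrow>
     f \<in> borel_measurable borel \<and> log_concave_fun f \<and>
     (\<integral>\<^sup>+x. ennreal (f x) \<partial>lborel) = 1 \<and>
     has_bochner_integral lborel (\<lambda>x. f x *\<^sub>R x) 0"

definition convex_body :: "'a::euclidean_space set \<Rightarrow> bool" where
  "convex_body A \<longleftrightarrow> compact A \<and> convex A \<and> interior A \<noteq> {}"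

definition boundary_measure :: "'a::euclidean_space measure \<Rightarrow> 'a set \<Rightarrow> ereal" where
  "boundary_measure M A = Liminf (at_right 0)
     (\<lambda>e. ereal (measure M ({a + e *\<^sub>R b | a b. a \<in> A \<and> b \<in> cball 0 1} - A) / e))"

end

theory Submission
  imports Defs
begin


lemma no_halfspace:
  fixes f :: "'a::euclidean_space \<Rightarrow> real"
  assumes cld: "centered_log_concave_density f" and g: "g \<noteq> 0"
    and hs: "\<And>x. f x > 0 \<Longrightarrow> 0 \<le> g \<bullet> x"
  shows False
proof -
  have fm[measurable]: "f \<in> borel_measurable borel" and lc: "log_concave_fun f"
    and one: "(\<integral>\<^sup>+x. ennreal (f x) \<partial>lborel) = 1"
    and bi: "has_bochner_integral lborel (\<lambda>x. f x *\<^sub>R x) 0"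
    using cld by (auto simp: centered_log_concave_density_def)
  have f0: "\<And>x. 0 \<le> f x" using lc by (auto simp: log_concave_fun_def)
  have int: "integrable lborel (\<lambda>x. f x *\<^sub>R x)" and i0: "integral\<^sup>L lborel (\<lambda>x. f x *\<^sub>R x) = 0"
    using bi by (auto simp: has_bochner_integral_iff)
  have int2: "integrable lborel (\<lambda>x. g \<bullet> (f x *\<^sub>R x))"
    using int by (rule integrable_inner_right)
  have "integral\<^sup>L lborel (\<lambda>x. g \<bullet> (f x *\<^sub>R x)) = g \<bullet> integral\<^sup>L lborel (\<lambda>x. f x *\<^sub>R x)"
    using int by (rule integral_inner_right)
  then have "integral\<^sup>L lborel (\<lambda>x. g \<bullet> (f x *\<^sub>R x)) = 0" using i0 by simp
  moreover have "AE x in lborel. 0 \<le> g \<bullet> (f x *\<^sub>R x)"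
  proof (rule AE_I2)
    fix x show "0 \<le> g \<bullet> (f x *\<^sub>R x)"
      using hs[of x] f0[of x] by (cases "f x > 0") auto
  qed
  ultimately have ae: "AE x in lborel. g \<bullet> (f x *\<^sub>R x) = 0"
    using integral_nonneg_eq_0_iff_AE[OF int2] by simp
  have "{x. g \<bullet> x = 0} \<in> null_sets lebesgue"
    using negligible_hyperplane[of g 0] g negligible_iff_null_sets by auto
  then have "{x. g \<bullet> x = 0} \<in> null_sets lborel"
    by (subst null_sets_completion_iff[symmetric]) auto
  then have "AE x in lborel. g \<bullet> x \<noteq> 0"
    by (rule AE_I') auto
  with ae have "AE x in lborel. ennreal (f x) = 0"
    by eventually_elim auto
  then have "(\<integral>\<^sup>+x. ennreal (f x) \<partial>lborel) = (\<integral>\<^sup>+x. 0 \<partial>lborel)"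
    using nn_integral_cong_AE[where M=lborel and u="\<lambda>x. ennreal (f x)" and v="\<lambda>_. 0"] by simp
  with one show False by simp
qed

lemma lcf_pos:
  assumes "log_concave_fun f" "f x > 0" "f y > 0" "0 \<le> a" "0 \<le> b" "a + b = 1"
  shows "f (a *\<^sub>R x + b *\<^sub>R y) > 0 \<and> a * ln (f x) + b * ln (f y) \<le> ln (f (a *\<^sub>R x + b *\<^sub>R y))"
proof (cases "b = 0 \<or> a = 0")
  case True
  then show ?thesis using assms by auto
next
  case False
  then have t: "b \<in> {0<..<1}" using assms by auto
  have a: "a = 1 - b" using assms by simp
  have le: "f x powr (1 - b) * f y powr b \<le> f ((1 - b) *\<^sub>R x + b *\<^sub>R y)"
    using assms(1) t unfolding log_concave_fun_def by blast
  have p: "0 < f x powr (1 - b) * f y powr b" using assms by simp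
  have "ln (f x powr (1 - b) * f y powr b) = (1 - b) * ln (f x) + b * ln (f y)"
    using assms by (simp add: ln_mult ln_powr)
  moreover have "ln (f x powr (1 - b) * f y powr b) \<le> ln (f ((1 - b) *\<^sub>R x + b *\<^sub>R y))"
    using le p by simp
  ultimately show ?thesis using le p a by auto
qed

lemma supergrad:
  fixes f :: "'a::euclidean_space \<Rightarrow> real"
  assumes cld: "centered_log_concave_density f"
  shows "f 0 > 0 \<and> (\<exists>h. \<forall>x. f x \<le> f 0 * exp (h \<bullet> x))"
proof -
  have lc: "log_concave_fun f" using cld by (auto simp: centered_log_concave_density_def)
  have f0: "\<And>x. 0 \<le> f x" using lc by (auto simp: log_concave_fun_def)
  have cS: "convex {x. f x > 0}"
    unfolding convex_def using lcf_pos[OF lc] by auto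
  have pos: "f 0 > 0"
  proof (rule ccontr)
    assume "\<not> f 0 > 0"
    then have "0 \<notin> {x. f x > 0}" by simp
    from separating_hyperplane_set_0[OF cS this] obtain a where "a \<noteq> 0" "\<forall>x\<in>{x. f x > 0}. 0 \<le> a \<bullet> x"
      by blast
    then show False using no_halfspace[OF cld, of a] by auto
  qed
  define H where "H = {(x, u) | x u. f x > 0 \<and> u < ln (f x) - ln (f 0)}"
  have cH: "convex H"
    unfolding convex_def
  proof (intro ballI allI impI)
    fix z w :: "'a \<times> real" and a b :: real
    assume z: "z \<in> H" and w: "w \<in> H" and ab: "0 \<le> a" "0 \<le> b" "a + b = 1"
    obtain x u where xu: "z = (x, u)" "f x > 0" "u < ln (f x) - ln (f 0)" using z H_def by auto
    obtain y v where yv: "w = (y, v)" "f y > 0" "v < ln (f y) - ln (f 0)" using w H_def by auto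
    have L: "f (a *\<^sub>R x + b *\<^sub>R y) > 0 \<and> a * ln (f x) + b * ln (f y) \<le> ln (f (a *\<^sub>R x + b *\<^sub>R y))"
      using lcf_pos[OF lc xu(2) yv(2) ab] .
    have "a * u + b * v < a * (ln (f x) - ln (f 0)) + b * (ln (f y) - ln (f 0))"
    proof (cases "a = 0")
      case True then show ?thesis using ab yv by simp
    next
      case False
      then have "a * u < a * (ln (f x) - ln (f 0))" using ab xu by simp
      moreover have "b * v \<le> b * (ln (f y) - ln (f 0))" using ab yv by (simp add: mult_left_mono)
      ultimately show ?thesis by simp
    qed
    also have "\<dots> = a * ln (f x) + b * ln (f y) - (a + b) * ln (f 0)" by (simp add: algebra_simps)
    also have "\<dots> = a * ln (f x) + b * ln (f y) - ln (f 0)" using ab by simp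
    finally have "a * u + b * v < ln (f (a *\<^sub>R x + b *\<^sub>R y)) - ln (f 0)" using L by simp
    then show "a *\<^sub>R z + b *\<^sub>R w \<in> H" using L xu yv unfolding H_def by auto
  qed
  have "0 \<notin> H" unfolding H_def by (auto simp: zero_prod_def)
  from separating_hyperplane_set_0[OF cH this] obtain p where p: "p \<noteq> 0" "\<forall>z\<in>H. 0 \<le> p \<bullet> z"
    by blast
  obtain g c where gc: "p = (g, c)" by (cases p)
  have sep: "0 \<le> g \<bullet> x + c * u" if "f x > 0" "u < ln (f x) - ln (f 0)" for x u
    using p(2) that gc unfolding H_def by (auto simp: inner_Pair)
  have "c \<le> 0"
  proof (rule ccontr)
    assume "\<not> c \<le> 0"
    then have "0 \<le> g \<bullet> 0 + c * (-1)" using sep[of 0 "-1"] pos by simp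
    then show False using \<open>\<not> c \<le> 0\<close> by simp
  qed
  moreover have "c \<noteq> 0"
  proof
    assume c0: "c = 0"
    then have "g \<noteq> 0" using p gc by (simp add: zero_prod_def)
    moreover have "0 \<le> g \<bullet> x" if "f x > 0" for x
      using sep[of x "ln (f x) - ln (f 0) - 1"] that c0 by simp
    ultimately show False using no_halfspace[OF cld] by blast
  qed
  ultimately have cneg: "c < 0" by simp
  define h where "h = (- 1 / c) *\<^sub>R g"
  have "f x \<le> f 0 * exp (h \<bullet> x)" for x
  proof (cases "f x > 0")
    case False then show ?thesis using f0[of x] pos by simp
  next
    case True
    have "ln (f x) - ln (f 0) \<le> h \<bullet> x"
    proof (rule dense_le)
      fix u assume "u < ln (f x) - ln (f 0)"
      then have "0 \<le> g \<bullet> x + c * u" using sep True by simp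
      then have "- c * u \<le> g \<bullet> x" by simp
      then show "u \<le> h \<bullet> x" using cneg unfolding h_def by (simp add: field_simps)
    qed
    then have "exp (ln (f x)) \<le> exp (ln (f 0) + h \<bullet> x)" by simp
    then show ?thesis using True pos by (simp add: exp_add)
  qed
  then show ?thesis using pos by blast
qed

lemma int_le_nn:
  fixes k :: "'b \<Rightarrow> real"
  assumes "integrable M k"
  shows "ennreal (integral\<^sup>L M k) \<le> (\<integral>\<^sup>+x. ennreal (k x) \<partial>M)"
proof -
  have ip: "integrable M (\<lambda>x. max 0 (k x))" using assms by auto
  have "integral\<^sup>L M k \<le> integral\<^sup>L M (\<lambda>x. max 0 (k x))"
    using assms ip by (intro integral_mono) auto
  then have "ennreal (integral\<^sup>L M k) \<le> ennreal (integral\<^sup>L M (\<lambda>x. max 0 (k x)))"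
    by (rule ennreal_leI)
  also have "\<dots> = (\<integral>\<^sup>+x. ennreal (max 0 (k x)) \<partial>M)"
    using ip by (subst nn_integral_eq_integral) auto
  also have "\<dots> = (\<integral>\<^sup>+x. ennreal (k x) \<partial>M)"
    by (intro nn_integral_cong) (auto simp: max_def ennreal_neg)
  finally show ?thesis .
qed

lemma nn_integral_affine:
  fixes t :: "'a::euclidean_space" and g :: "'a \<Rightarrow> ennreal"
  assumes [measurable]: "g \<in> borel_measurable borel" and c: "c \<noteq> 0"
  shows "(\<integral>\<^sup>+x. g x \<partial>lborel) = ennreal (\<bar>c\<bar> ^ DIM('a)) * (\<integral>\<^sup>+x. g (t + c *\<^sub>R x) \<partial>lborel)"
  by (subst lborel_affine[OF c, of t])
     (simp add: nn_integral_density nn_integral_distr nn_integral_cmult)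

lemma fradelizi_t:
  fixes f :: "'a::euclidean_space \<Rightarrow> real"
  assumes cld: "centered_log_concave_density f" and fz: "f z > 0" and t: "0 < t" "t < 1"
  shows "ln (f z) - ln (f 0) \<le> real DIM('a) / (1 - t)"
proof -
  have fm[measurable]: "f \<in> borel_measurable borel" and lc: "log_concave_fun f"
    and one: "(\<integral>\<^sup>+x. ennreal (f x) \<partial>lborel) = 1"
    and bi: "has_bochner_integral lborel (\<lambda>x. f x *\<^sub>R x) 0"
    using cld by (auto simp: centered_log_concave_density_def)
  have f0: "\<And>x. 0 \<le> f x" using lc by (auto simp: log_concave_fun_def)
  obtain h where pos: "f 0 > 0" and h: "\<And>x. f x \<le> f 0 * exp (h \<bullet> x)"
    using supergrad[OF cld] by blast
  have intf: "integrable lborel f"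
    using one by (intro integrableI_nn_integral_finite[where x=1]) (auto simp: f0)
  have intf1: "integral\<^sup>L lborel f = 1"
    using one intf f0 by (subst (asm) nn_integral_eq_integral) auto
  have int: "integrable lborel (\<lambda>x. f x *\<^sub>R x)" and i0: "integral\<^sup>L lborel (\<lambda>x. f x *\<^sub>R x) = 0"
    using bi by (auto simp: has_bochner_integral_iff)
  have int2: "integrable lborel (\<lambda>x. h \<bullet> (f x *\<^sub>R x))"
    using int by (rule integrable_inner_right)
  have i2: "integral\<^sup>L lborel (\<lambda>x. h \<bullet> (f x *\<^sub>R x)) = 0"
    using integral_inner_right[OF int, of h] i0 by simp
  define K where "K = f z powr t * f 0 powr (- t)"
  have Kpos: "K > 0" unfolding K_def using fz pos by simp
  define k where "k x = K * (f x - t * (h \<bullet> (f x *\<^sub>R x)))" for x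
  have intk: "integrable lborel k" unfolding k_def using intf int2 by auto
  have ik: "integral\<^sup>L lborel k = K" unfolding k_def using intf int2 intf1 i2
    by (simp add: Bochner_Integration.integral_diff)
  have pw: "k x \<le> f (t *\<^sub>R z + (1 - t) *\<^sub>R x)" for x
  proof (cases "f x > 0")
    case False
    then have "f x = 0" using f0[of x] by simp
    then show ?thesis unfolding k_def using f0 by simp
  next
    case True
    have lcx: "f x powr (1 - t) * f z powr t \<le> f ((1 - t) *\<^sub>R x + t *\<^sub>R z)"
      using lc t unfolding log_concave_fun_def by auto
    have "(f 0 * exp (h \<bullet> x)) powr (- t) \<le> f x powr (- t)"
      using h[of x] True t by (intro powr_mono2') auto
    then have e: "f 0 powr (- t) * exp (- t * (h \<bullet> x)) \<le> f x powr (- t)"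
      using pos by (simp add: powr_mult exp_powr_real mult.commute)
    have "1 - t * (h \<bullet> x) \<le> exp (- t * (h \<bullet> x))"
      using exp_ge_add_one_self[of "- t * (h \<bullet> x)"] by simp
    then have "f x * (1 - t * (h \<bullet> x)) * f 0 powr (- t) \<le> f x * exp (- t * (h \<bullet> x)) * f 0 powr (- t)"
      using True by (intro mult_right_mono mult_left_mono) auto
    also have "\<dots> \<le> f x * f x powr (- t)"
      using e True by (simp add: mult.assoc mult.commute mult.left_commute)
    also have "\<dots> = f x powr (1 - t)"
      using True by (simp add: powr_diff powr_minus divide_inverse)
    finally have "f x * (1 - t * (h \<bullet> x)) * f 0 powr (- t) \<le> f x powr (1 - t)" .
    then have "f x * (1 - t * (h \<bullet> x)) * f 0 powr (- t) * f z powr t \<le> f x powr (1 - t) * f z powr t"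
      by (rule mult_right_mono) simp
    also have "\<dots> \<le> f (t *\<^sub>R z + (1 - t) *\<^sub>R x)" using lcx by (simp add: add.commute)
    finally show ?thesis unfolding k_def K_def by (simp add: algebra_simps)
  qed
  have "ennreal K \<le> (\<integral>\<^sup>+x. ennreal (k x) \<partial>lborel)"
    using int_le_nn[OF intk] ik by simp
  also have "\<dots> \<le> (\<integral>\<^sup>+x. ennreal (f (t *\<^sub>R z + (1 - t) *\<^sub>R x)) \<partial>lborel)"
    using pw by (intro nn_integral_mono ennreal_leI) auto
  finally have Kle: "ennreal K \<le> (\<integral>\<^sup>+x. ennreal (f (t *\<^sub>R z + (1 - t) *\<^sub>R x)) \<partial>lborel)" .
  have "1 = ennreal (\<bar>1 - t\<bar> ^ DIM('a)) * (\<integral>\<^sup>+x. ennreal (f (t *\<^sub>R z + (1 - t) *\<^sub>R x)) \<partial>lborel)"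
    using one nn_integral_affine[of "\<lambda>x. ennreal (f x)" "1 - t" "t *\<^sub>R z"] t by simp
  also have "\<dots> \<ge> ennreal ((1 - t) ^ DIM('a)) * ennreal K"
  proof -
    have "\<bar>1 - t\<bar> = 1 - t" using t by simp
    then show ?thesis using Kle by (simp add: mult_left_mono)
  qed
  finally have "ennreal ((1 - t) ^ DIM('a) * K) \<le> 1"
    using t Kpos by (simp add: ennreal_mult)
  then have le1: "(1 - t) ^ DIM('a) * K \<le> 1"
    by (simp add: ennreal_le_1)
  have "ln ((1 - t) ^ DIM('a) * K) \<le> 0" using le1 t Kpos by simp
  then have "real DIM('a) * ln (1 - t) + (t * ln (f z) - t * ln (f 0)) \<le> 0"
    using t Kpos fz pos unfolding K_def by (simp add: ln_mult ln_realpow ln_powr)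
  moreover have "- ln (1 - t) \<le> t / (1 - t)"
  proof -
    have "ln (1 / (1 - t)) \<le> 1 / (1 - t) - 1" using t by (intro ln_le_minus_one) auto
    then show ?thesis using t by (simp add: ln_div field_simps)
  qed
  ultimately have "t * (ln (f z) - ln (f 0)) \<le> real DIM('a) * (t / (1 - t))"
    by (smt (verit, best) mult_left_mono of_nat_0_le_iff right_diff_distrib)
  then have "t * (ln (f z) - ln (f 0)) \<le> t * (real DIM('a) / (1 - t))" by (simp add: mult.commute)
  then show ?thesis using t(1) mult_le_cancel_left_pos by blast
qed

lemma fradelizi:
  fixes f :: "'a::euclidean_space \<Rightarrow> real"
  assumes cld: "centered_log_concave_density f" and fz: "f z > 0"
  shows "ln (f z) - ln (f 0) \<le> real DIM('a)"
proof (rule ccontr)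
  define L where "L = ln (f z) - ln (f 0)"
  define n where "n = real DIM('a)"
  assume "\<not> ln (f z) - ln (f 0) \<le> real DIM('a)"
  then have Ln: "L > n" unfolding L_def n_def by simp
  have n0: "n > 0" unfolding n_def by simp
  define t where "t = (1 - n / L) / 2"
  have Lp: "L > 0" using Ln n0 by simp
  have "n / L < 1" using Ln Lp by simp
  then have t: "0 < t" "t < 1" unfolding t_def using n0 Lp by (auto simp: field_simps)
  have "L \<le> n / (1 - t)" using fradelizi_t[OF cld fz t] unfolding L_def n_def .
  moreover have "n / (1 - t) < L"
  proof -
    have "1 - t = (1 + n / L) / 2" using Lp unfolding t_def by (simp add: field_simps)
    also have "\<dots> > n / L"
    proof -
      have "q < (1 + q) / 2" if "q < 1" for q :: real using that by simp
      then show ?thesis using \<open>n / L < 1\<close> by blast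
    qed
    finally have "n < (1 - t) * L" using Lp by (simp add: field_simps)
    then show ?thesis using t by (simp add: field_simps)
  qed
  ultimately show False by simp
qed

lemma scale_bound:
  fixes f :: "'a::euclidean_space \<Rightarrow> real"
  assumes cld: "centered_log_concave_density f" and s: "1 \<le> s"
  shows "f (s *\<^sub>R y) \<le> exp (real DIM('a) * (s - 1)) * f y"
proof (cases "f (s *\<^sub>R y) > 0")
  case False
  have lc: "log_concave_fun f" using cld by (auto simp: centered_log_concave_density_def)
  have f0: "\<And>x. 0 \<le> f x" using lc by (auto simp: log_concave_fun_def)
  show ?thesis using False f0[of y] f0[of "s *\<^sub>R y"] by simp
next
  case True
  have lc: "log_concave_fun f" using cld by (auto simp: centered_log_concave_density_def)
  have pos: "f 0 > 0" using supergrad[OF cld] by blast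
  have y: "(1 - 1 / s) *\<^sub>R 0 + (1 / s) *\<^sub>R (s *\<^sub>R y) = y" using s by simp
  have ab: "0 \<le> 1 - 1 / s" "0 \<le> 1 / s" "(1 - 1 / s) + 1 / s = 1" using s by auto
  have L0: "f ((1 - 1 / s) *\<^sub>R 0 + (1 / s) *\<^sub>R (s *\<^sub>R y)) > 0 \<and>
      (1 - 1 / s) * ln (f 0) + (1 / s) * ln (f (s *\<^sub>R y)) \<le> ln (f ((1 - 1 / s) *\<^sub>R 0 + (1 / s) *\<^sub>R (s *\<^sub>R y)))"
    by (rule lcf_pos[OF lc pos True ab])
  have L: "(1 - 1 / s) * ln (f 0) + (1 / s) * ln (f (s *\<^sub>R y)) \<le> ln (f y)"
    using L0 y by simp
  have fy: "f y > 0" using L0 y by simp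
  have "(s - 1) * ln (f 0) + ln (f (s *\<^sub>R y)) \<le> s * ln (f y)"
  proof -
    have "s * ((1 - 1 / s) * ln (f 0) + (1 / s) * ln (f (s *\<^sub>R y))) \<le> s * ln (f y)"
      using L s by (intro mult_left_mono) auto
    then show ?thesis using s by (simp add: algebra_simps)
  qed
  moreover have "ln (f y) - ln (f 0) \<le> real DIM('a)" using fradelizi[OF cld fy] .
  moreover have "(s - 1) * (ln (f y) - ln (f 0)) \<le> (s - 1) * real DIM('a)"
    using s \<open>ln (f y) - ln (f 0) \<le> real DIM('a)\<close> by (intro mult_left_mono) auto
  moreover have "(s - 1) * (ln (f y) - ln (f 0)) = s * ln (f y) - ln (f y) - (s - 1) * ln (f 0)"
    by (simp add: algebra_simps)
  ultimately have "ln (f (s *\<^sub>R y)) \<le> ln (f y) + (s - 1) * real DIM('a)"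
    by linarith
  then have "exp (ln (f (s *\<^sub>R y))) \<le> exp (ln (f y) + (s - 1) * real DIM('a))" by simp
  then show ?thesis using True fy by (simp add: exp_add mult.commute)
qed



theorem lemma4p3:
  fixes f :: "'a::euclidean_space \<Rightarrow> real" and A :: "'a set" and r :: real
  assumes "centered_log_concave_density f"
    and "convex_body A"
    and "r > 0" and "cball 0 r \<subseteq> A"
  shows "boundary_measure (density lborel (\<lambda>x. ennreal (f x))) A
         \<le> ereal (2 * real DIM('a) * measure (density lborel (\<lambda>x. ennreal (f x))) A / r)"
proof -
  note cld = assms(1)
  have fm[measurable]: "f \<in> borel_measurable borel" and lc: "log_concave_fun f"
    and one: "(\<integral>\<^sup>+x. ennreal (f x) \<partial>lborel) = 1"
    using cld by (auto simp: centered_log_concave_density_def)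
  have f0: "\<And>x. 0 \<le> f x" using lc by (auto simp: log_concave_fun_def)
  have cA: "compact A" "convex A" using assms(2) by (auto simp: convex_body_def)
  have r: "r > 0" using assms(3) .
  have A0: "0 \<in> A" using assms(4) r by auto
  define M where "M = density lborel (\<lambda>x. ennreal (f x))"
  define n where "n = real DIM('a)"
  define m where "m = measure M A"
  have sM: "sets M = sets borel" unfolding M_def by simp
  have spM: "space M = UNIV" unfolding M_def by simp
  have emM: "emeasure M X = (\<integral>\<^sup>+x. ennreal (f x) * indicator X x \<partial>lborel)" if "X \<in> sets borel" for X
    unfolding M_def using that by (subst emeasure_density) auto
  have "emeasure M (space M) = 1" using emM[of UNIV] one spM by simp
  then interpret finite_measure M by (intro finite_measureI) simp
  have Ab: "A \<in> sets borel" using cA by (simp add: compact_imp_closed borel_closed)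
  define E where "E e = {a + e *\<^sub>R b | a b. a \<in> A \<and> b \<in> cball 0 1}" for e :: real
  define Q where "Q e = (1 + e / r) ^ DIM('a) * exp (n * (e / r))" for e :: real
  have bound: "measure M (E e - A) / e \<le> m * ((Q e - Q 0) / (e - 0))" if e: "e > 0" for e
  proof -
    define s where "s = 1 + e / r"
    have s1: "s \<ge> 1" using e r unfolding s_def by simp
    have sne: "s \<noteq> 0" using s1 by simp
    define sA where "sA = (\<lambda>x. s *\<^sub>R x) ` A"
    have sAb: "sA \<in> sets borel" unfolding sA_def
      using cA by (simp add: compact_scaling compact_imp_closed borel_closed)
    have ES: "E e \<subseteq> sA"
    proof
      fix x assume "x \<in> E e"
      then obtain a b where x: "x = a + e *\<^sub>R b" "a \<in> A" "b \<in> cball 0 1" unfolding E_def by auto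
      have rb: "r *\<^sub>R b \<in> A" using x(3) r assms(4) by (auto simp: dist_norm)
      have p: "(1 / s) *\<^sub>R a + (e / (r * s)) *\<^sub>R (r *\<^sub>R b) \<in> A"
      proof (rule convexD[OF cA(2) x(2) rb])
        show "0 \<le> 1 / s" "0 \<le> e / (r * s)" using e r s1 by auto
        have "1 / s + e / (r * s) = (1 + e / r) / s" using r sne by (simp add: add_divide_distrib)
        then show "1 / s + e / (r * s) = 1" using sne unfolding s_def by simp
      qed
      have "s *\<^sub>R ((1 / s) *\<^sub>R a + (e / (r * s)) *\<^sub>R (r *\<^sub>R b)) = x"
        using x(1) sne r by (simp add: scaleR_add_right)
      then show "x \<in> sA" unfolding sA_def using p by (metis image_eqI)
    qed
    have AS: "A \<subseteq> sA"
    proof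
      fix a assume a: "a \<in> A"
      have p: "(1 / s) *\<^sub>R a + (1 - 1 / s) *\<^sub>R 0 \<in> A"
        apply (rule convexD[OF cA(2) a A0]) using s1 by auto
      have "s *\<^sub>R ((1 / s) *\<^sub>R a + (1 - 1 / s) *\<^sub>R 0) = a" using sne by simp
      then show "a \<in> sA" unfolding sA_def using p by (metis image_eqI)
    qed
    have "emeasure M sA = (\<integral>\<^sup>+x. ennreal (f x) * indicator sA x \<partial>lborel)" using emM sAb by simp
    also have "\<dots> = ennreal (\<bar>s\<bar> ^ DIM('a)) * (\<integral>\<^sup>+y. ennreal (f (0 + s *\<^sub>R y)) * indicator sA (0 + s *\<^sub>R y) \<partial>lborel)"
      using sne sAb by (intro nn_integral_affine) auto
    also have "\<dots> = ennreal (s ^ DIM('a)) * (\<integral>\<^sup>+y. ennreal (f (s *\<^sub>R y)) * indicator A y \<partial>lborel)"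
    proof -
      have "indicator sA (s *\<^sub>R y) = (indicator A y :: ennreal)" for y
        unfolding sA_def using sne by (auto simp: indicator_def)
      then show ?thesis using s1 by simp
    qed
    also have "\<dots> \<le> ennreal (s ^ DIM('a)) * (\<integral>\<^sup>+y. ennreal (exp (n * (s - 1))) * (ennreal (f y) * indicator A y) \<partial>lborel)"
    proof -
      have "ennreal (f (s *\<^sub>R y)) \<le> ennreal (exp (n * (s - 1))) * ennreal (f y)" for y
        using scale_bound[OF cld s1, of y] f0[of y] unfolding n_def
        by (subst ennreal_mult[symmetric]) (auto intro: ennreal_leI)
      then show ?thesis
        by (intro mult_left_mono nn_integral_mono) (auto simp: indicator_def)
    qed
    also have "\<dots> = ennreal (s ^ DIM('a) * exp (n * (s - 1))) * emeasure M A"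
      using emM Ab s1 by (simp add: nn_integral_cmult ennreal_mult mult.assoc)
    finally have "ennreal (measure M sA) \<le> ennreal (s ^ DIM('a) * exp (n * (s - 1)) * m)"
      using s1 unfolding m_def by (simp add: emeasure_eq_measure ennreal_mult)
    then have msA: "measure M sA \<le> s ^ DIM('a) * exp (n * (s - 1)) * m"
      using s1 unfolding m_def by (simp add: ennreal_le_iff)
    have "measure M (E e - A) \<le> measure M (sA - A)"
      using ES sAb Ab sM by (intro finite_measure_mono) auto
    also have "\<dots> = measure M sA - m"
      unfolding m_def using AS sAb Ab sM by (intro finite_measure_Diff) auto
    also have "\<dots> \<le> (Q e - Q 0) * m"
      using msA unfolding Q_def s_def by (simp add: algebra_simps)
    finally show ?thesis using e by (simp add: divide_right_mono field_simps)
  qed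
  have "(Q has_real_derivative (n / r + n / r)) (at 0)"
    unfolding Q_def using r by (auto intro!: derivative_eq_intros simp: n_def)
  then have "(Q has_real_derivative (n / r + n / r)) (at 0 within {0<..})"
    by (rule has_field_derivative_at_within)
  then have "((\<lambda>e. (Q e - Q 0) / (e - 0)) \<longlongrightarrow> n / r + n / r) (at_right 0)"
    by (simp add: has_field_derivative_iff)
  then have "((\<lambda>e. ereal (m * ((Q e - Q 0) / (e - 0)))) \<longlongrightarrow> ereal (m * (n / r + n / r))) (at_right 0)"
    by (intro tendsto_ereal tendsto_mult_left)
  then have lim: "Liminf (at_right 0) (\<lambda>e. ereal (m * ((Q e - Q 0) / (e - 0)))) = ereal (m * (n / r + n / r))"
    by (intro lim_imp_Liminf) auto
  have "boundary_measure M A = Liminf (at_right 0) (\<lambda>e. ereal (measure M (E e - A) / e))"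
    unfolding boundary_measure_def E_def by simp
  also have "\<dots> \<le> Liminf (at_right 0) (\<lambda>e. ereal (m * ((Q e - Q 0) / (e - 0))))"
    apply (rule Liminf_mono)
    using eventually_at_right_less[of "0::real"] by eventually_elim (use bound in auto)
  also have "\<dots> = ereal (2 * n * m / r)" using lim by (simp add: field_simps)
  finally show ?thesis unfolding M_def n_def m_def .
qed

end
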